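(* Assume $\rho_i,\beta_i$ are continuous on $[0,\bar b_i]$ for all $i\in\mathcal{I}$. Let $\lambda^*$ be a minimizer of $Q$ over $\mathbb{R}^{|\mathcal{K}|}$ with $Q(\lambda^* )$ finite, and suppose that for every $i\in\mathcal{I}$ the set $\mathcal{V}_i := \{v_i(x_i,b_i) : (x_i,b_i)\in S_i^*(\lambda^* )\}\subseteq\mathbb{R}^{|\mathcal{K}|}$ is convex. Then there exists $(\mathbf{x}^*,\mathbf{b}^* )\in\mathcal{S}$ with $(x_i^*,b_i^* )\in S_i^*(\lambda^* )$ for all $i$ (so $(\mathbf{x}^*,\mathbf{b}^* )$ attains the supremum defining $Q(\lambda^* )$) such that $F(\mathbf{x}^*,\mathbf{b}^* ) = Q(\lambda^* )$.
   Context: Setting. $\mathcal{I}$, $\mathcal{K}$ finite, $\mathcal{E}\subseteq\mathcal{I}\times\mathcal{K}$, $\mathcal{K}_i := \{k:(i,k)\in\mathcal{E}\}$, $\mathcal{I}_k := \{i:(i,k)\in\mathcal{E}\}$; $s_i>0$, $r_{ik}\ge 0$, $\bar b_i>0$; $\rho_i:[0,\bar b_i]\to[0,1]$, $\beta_i:[0,\bar b_i]\to\mathbb{R}$ nondecreasing with $\beta_i(b)\le b$. $h_i(z,b) := (z-\beta_i(b))\rho_i(b)$. For each $i$, $S_i := \{(x_i,b_i)\in\mathbb{R}^{|\mathcal{K}_i|}\times\mathbb{R}^{|\mathcal{K}_i|} : b_i\in[0,\bar b_i]^{|\mathcal{K}_i|},\ \sum_{k\in\mathcal{K}_i}x_{ik}\le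 1,\ x_i\ge 0\}$ and $\mathcal{S}=\prod_i S_i$. $v_i(x_i,b_i)\in\mathbb{R}^{|\mathcal{K}|}$ has $k$-th coordinate $r_{ik}s_ix_{ik}\rho_i(b_{ik})$ if $k\in\mathcal{K}_i$ and $0$ otherwise; $v(\mathbf{x},\mathbf{b}) = \sum_i v_i(x_i,b_i)$. $\pi(\mathbf{x},\mathbf{b}) := \sum_{(i,k)\in\mathcal{E}} h_i(r_{ik},b_{ik})s_ix_{ik}$. $\psi_i(\lambda) := \max_{(x_i,b_i)\in S_i}\sum_{k\in\mathcal{K}_i} h_i(r_{ik}(1-\lambda_k),b_{ik})s_ix_{ik}$, with $S_i^*(\lambda)$ its set of maximizers. $u:\mathbb{R}^{|\mathcal{K}|}\to\mathbb{R}\cup\{-\infty\}$ concave, $p(\lambda):=\sup_v\{\lambda^Tv+u(v)\}$. Dual function $Q(\lambda) := \sup_{(\mathbf{x},\mathbf{b})\in\mathcal{S}}(\pi(\mathbf{x},\mathbf{b})-\lambda^Tv(\mathbf{x},\mathbf{b})) + p(\lambda)$. Primal objective $F(\mathbf{x},\mathbf{b}) := \pi(\mathbf{x},\mathbf{b}) + \inf_{\lambda\in\mathbb{R}^{|\mathcal{K}|}}\{p(\lambda)-\lambda^Tv(\mathbf{x},\mathbf{b})\}$. *)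

theory Defs
  imports "HOL-Analysis.Analysis"
begin

text \<open>Index sets are finite types 'i (for I) and 'k (for K).  A point (x_i,b_i) of R^{|K_i|} x R^{|K_i|} is represented by a pair of
functions 'k \<Rightarrow> real whose coordinates outside K_i are fixed to 0.\<close>

definition Kset :: "('i \<times> 'k) set \<Rightarrow> 'i \<Rightarrow> 'k set" where
  "Kset E i = {k. (i, k) \<in> E}"

definition hfun :: "('i \<Rightarrow> real \<Rightarrow> real) \<Rightarrow> ('i \<Rightarrow> real \<Rightarrow> real) \<Rightarrow> 'i \<Rightarrow> real \<Rightarrow> real \<Rightarrow> real" where
  "hfun rho beta i z b = (z - beta i b) * rho i b"

definition Sset :: "('i \<times> 'k) set \<Rightarrow> ('i \<Rightarrow> real) \<Rightarrow> 'i \<Rightarrow> (('k \<Rightarrow> real) \<times> ('k \<Rightarrow> real)) set" where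
  "Sset E bbar i = {(x, b).
      (\<forall>k. k \<notin> Kset E i \<longrightarrow> x k = 0 \<and> b k = 0) \<and>
      (\<forall>k\<in>Kset E i. 0 \<le> b k \<and> b k \<le> bbar i \<and> 0 \<le> x k) \<and>
      (\<Sum>k\<in>Kset E i. x k) \<le> 1}"

definition psi_obj :: "('i \<times> 'k::finite) set \<Rightarrow> ('i \<Rightarrow> real) \<Rightarrow> ('i \<Rightarrow> 'k \<Rightarrow> real) \<Rightarrow>
    ('i \<Rightarrow> real \<Rightarrow> real) \<Rightarrow> ('i \<Rightarrow> real \<Rightarrow> real) \<Rightarrow> 'i \<Rightarrow> real ^ 'k \<Rightarrow>
    ('k \<Rightarrow> real) \<times> ('k \<Rightarrow> real) \<Rightarrow> real" where
  "psi_obj E s r rho beta i lam z =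
     (\<Sum>k\<in>Kset E i. hfun rho beta i (r i k * (1 - lam $ k)) (snd z k) * s i * fst z k)"

definition Sstar :: "('i \<times> 'k::finite) set \<Rightarrow> ('i \<Rightarrow> real) \<Rightarrow> ('i \<Rightarrow> 'k \<Rightarrow> real) \<Rightarrow>
    ('i \<Rightarrow> real \<Rightarrow> real) \<Rightarrow> ('i \<Rightarrow> real \<Rightarrow> real) \<Rightarrow> ('i \<Rightarrow> real) \<Rightarrow> 'i \<Rightarrow> real ^ 'k \<Rightarrow>
    (('k \<Rightarrow> real) \<times> ('k \<Rightarrow> real)) set" where
  "Sstar E s r rho beta bbar i lam =
     {z \<in> Sset E bbar i. \<forall>z'\<in>Sset E bbar i.
        psi_obj E s r rho beta i lam z' \<le> psi_obj E s r rho beta i lam z}"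

definition vi :: "('i \<times> 'k::finite) set \<Rightarrow> ('i \<Rightarrow> real) \<Rightarrow> ('i \<Rightarrow> 'k \<Rightarrow> real) \<Rightarrow>
    ('i \<Rightarrow> real \<Rightarrow> real) \<Rightarrow> 'i \<Rightarrow> ('k \<Rightarrow> real) \<times> ('k \<Rightarrow> real) \<Rightarrow> real ^ 'k" where
  "vi E s r rho i z = (\<chi> k. if k \<in> Kset E i then r i k * s i * fst z k * rho i (snd z k) else 0)"

definition vtot :: "('i::finite \<times> 'k) set \<Rightarrow> ('i \<Rightarrow> real) \<Rightarrow> ('i \<Rightarrow> 'k \<Rightarrow> real) \<Rightarrow>
    ('i \<Rightarrow> real \<Rightarrow> real) \<Rightarrow> ('i \<Rightarrow> 'k \<Rightarrow> real) \<Rightarrow> ('i \<Rightarrow> 'k \<Rightarrow> real) \<Rightarrow> real ^ 'k" where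
  "vtot E s r rho x b = (\<Sum>i\<in>UNIV. vi E s r rho i (x i, b i))"

definition pi_obj :: "('i \<times> 'k) set \<Rightarrow> ('i \<Rightarrow> real) \<Rightarrow> ('i \<Rightarrow> 'k \<Rightarrow> real) \<Rightarrow>
    ('i \<Rightarrow> real \<Rightarrow> real) \<Rightarrow> ('i \<Rightarrow> real \<Rightarrow> real) \<Rightarrow>
    ('i \<Rightarrow> 'k \<Rightarrow> real) \<Rightarrow> ('i \<Rightarrow> 'k \<Rightarrow> real) \<Rightarrow> real" where
  "pi_obj E s r rho beta x b =
     (\<Sum>(i, k)\<in>E. hfun rho beta i (r i k) (b i k) * s i * x i k)"

definition Sall :: "('i \<times> 'k) set \<Rightarrow> ('i \<Rightarrow> real) \<Rightarrow>
    (('i \<Rightarrow> 'k \<Rightarrow> real) \<times> ('i \<Rightarrow> 'k \<Rightarrow> real)) set" where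
  "Sall E bbar = {(x, b). \<forall>i. (x i, b i) \<in> Sset E bbar i}"

definition dotp :: "real ^ 'k::finite \<Rightarrow> real ^ 'k \<Rightarrow> real" where
  "dotp lam v = lam \<bullet> v"

definition concave_ext :: "((real ^ 'k::finite) \<Rightarrow> ereal) \<Rightarrow> bool" where
  "concave_ext u \<longleftrightarrow> convex {(v, t::real). ereal t \<le> u v}"

definition pconj :: "((real ^ 'k::finite) \<Rightarrow> ereal) \<Rightarrow> real ^ 'k \<Rightarrow> ereal" where
  "pconj u lam = (SUP v. ereal (dotp lam v) + u v)"

definition Qdual :: "('i::finite \<times> 'k::finite) set \<Rightarrow> ('i \<Rightarrow> real) \<Rightarrow> ('i \<Rightarrow> 'k \<Rightarrow> real) \<Rightarrow>
    ('i \<Rightarrow> real \<Rightarrow> real) \<Rightarrow> ('i \<Rightarrow> real \<Rightarrow> real) \<Rightarrow> ('i \<Rightarrow> real) \<Rightarrow>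
    ((real ^ 'k) \<Rightarrow> ereal) \<Rightarrow> real ^ 'k \<Rightarrow> ereal" where
  "Qdual E s r rho beta bbar u lam =
     (SUP z\<in>Sall E bbar. ereal (pi_obj E s r rho beta (fst z) (snd z)
                                  - dotp lam (vtot E s r rho (fst z) (snd z))))
     + pconj u lam"

definition Fprimal :: "('i::finite \<times> 'k::finite) set \<Rightarrow> ('i \<Rightarrow> real) \<Rightarrow> ('i \<Rightarrow> 'k \<Rightarrow> real) \<Rightarrow>
    ('i \<Rightarrow> real \<Rightarrow> real) \<Rightarrow> ('i \<Rightarrow> real \<Rightarrow> real) \<Rightarrow>
    ((real ^ 'k) \<Rightarrow> ereal) \<Rightarrow> ('i \<Rightarrow> 'k \<Rightarrow> real) \<Rightarrow> ('i \<Rightarrow> 'k \<Rightarrow> real) \<Rightarrow> ereal" where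
  "Fprimal E s r rho beta u x b =
     ereal (pi_obj E s r rho beta x b)
     + (INF lam. pconj u lam - ereal (dotp lam (vtot E s r rho x b)))"

end

theory Submission
  imports Defs
begin


locale Mset =
  fixes E :: "('i::finite \<times> 'k::finite) set" and s :: "'i \<Rightarrow> real"
    and r :: "'i \<Rightarrow> 'k \<Rightarrow> real" and bbar :: "'i \<Rightarrow> real"
    and rho beta :: "'i \<Rightarrow> real \<Rightarrow> real"
  assumes bbar_pos: "\<And>i. bbar i > 0"
    and rho_cont: "\<And>i. continuous_on {0..bbar i} (rho i)"
    and beta_cont: "\<And>i. continuous_on {0..bbar i} (beta i)"
begin

definition unflat :: "(real^('i\<times>'k)) \<times> (real^('i\<times>'k)) \<Rightarrow> ('i\<Rightarrow>'k\<Rightarrow>real) \<times> ('i\<Rightarrow>'k\<Rightarrow>real)" where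
  "unflat Y = (\<lambda>i k. fst Y $ (i,k), \<lambda>i k. snd Y $ (i,k))"

definition flat :: "('i\<Rightarrow>'k\<Rightarrow>real) \<times> ('i\<Rightarrow>'k\<Rightarrow>real) \<Rightarrow> (real^('i\<times>'k)) \<times> (real^('i\<times>'k))" where
  "flat z = ((\<chi> j. fst z (fst j) (snd j)), (\<chi> j. snd z (fst j) (snd j)))"

definition TT where "TT = {Y. unflat Y \<in> Sall E bbar}"

lemma unflat_flat[simp]: "unflat (flat z) = z"
  by (simp add: unflat_def flat_def)

lemma Sall_image: "Sall E bbar = unflat ` TT"
  unfolding TT_def by (auto intro!: image_eqI[where x="flat _"])

lemma TT_alt: "TT = {Y. \<forall>i k. if k \<in> Kset E i then 0 \<le> fst Y$(i,k) \<and> 0 \<le> snd Y$(i,k) \<and> snd Y$(i,k) \<le> bbar i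
     else fst Y$(i,k) = 0 \<and> snd Y$(i,k) = 0} \<inter> {Y. \<forall>i. (\<Sum>k\<in>Kset E i. fst Y$(i,k)) \<le> 1}"
  by (auto simp: TT_def Sall_def Sset_def unflat_def split: if_splits)

lemma closed_if: "closed {x. P x} \<Longrightarrow> closed {x. Q x} \<Longrightarrow> closed {x. if c then P x else Q x}"
  by (cases c) auto

lemma TT_closed: "closed TT"
  unfolding TT_alt
  apply (intro closed_Int closed_Collect_all closed_if closed_Collect_conj closed_Collect_le closed_Collect_eq)
  apply (intro continuous_intros)+
  done

lemma TT_bounded: "bounded TT"
proof -
  have "TT \<subseteq> cbox 0 (\<chi> j. 1) \<times> cbox 0 (\<chi> j. bbar (fst j))"
  proof
    fix Y assume Y: "Y \<in> TT"
    obtain X B where YXB: "Y = (X, B)" by (cases Y)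
    have "0 \<le> X$(i,k) \<and> X$(i,k) \<le> 1 \<and> 0 \<le> B$(i,k) \<and> B$(i,k) \<le> bbar i" for i k
    proof (cases "k \<in> Kset E i")
      case True
      with Y YXB have h: "\<forall>k\<in>Kset E i. 0 \<le> X$(i,k)" "(\<Sum>k\<in>Kset E i. X$(i,k)) \<le> 1"
        and "0 \<le> B$(i,k) \<and> B$(i,k) \<le> bbar i"
        unfolding TT_alt by (auto split: if_splits dest: spec[of _ i])
      moreover have "X$(i,k) \<le> (\<Sum>k\<in>Kset E i. X$(i,k))"
        using h True by (intro member_le_sum) auto
      ultimately show ?thesis using True by auto
    next
      case False
      with Y YXB show ?thesis using bbar_pos[of i] unfolding TT_alt by (auto dest!: spec[of _ i] spec[of _ k])
    qed
    then show "Y \<in> cbox 0 (\<chi> j. 1) \<times> cbox 0 (\<chi> j. bbar (fst j))"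
      by (auto simp: YXB mem_box_cart)
  qed
  then show ?thesis by (rule bounded_subset[OF bounded_Times[OF bounded_cbox bounded_cbox]])
qed

lemma TT_compact: "compact TT"
  using TT_closed TT_bounded by (simp add: compact_eq_bounded_closed)


definition J where "J lam z = (\<Sum>i\<in>UNIV. psi_obj E s r rho beta i lam (fst z i, snd z i))"
definition vz where "vz z = vtot E s r rho (fst z) (snd z)"

lemma TT_range: "Y \<in> TT \<Longrightarrow> k \<in> Kset E i \<Longrightarrow> snd Y $ (i,k) \<in> {0..bbar i}"
  unfolding TT_alt by (auto dest!: spec[of _ i] spec[of _ k])

lemma cont_rho: "k \<in> Kset E i \<Longrightarrow> continuous_on TT (\<lambda>Y. rho i (snd Y $ (i,k)))"
  by (rule continuous_on_compose2[OF rho_cont[of i]]) (auto intro!: continuous_intros TT_range)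

lemma cont_beta: "k \<in> Kset E i \<Longrightarrow> continuous_on TT (\<lambda>Y. beta i (snd Y $ (i,k)))"
  by (rule continuous_on_compose2[OF beta_cont[of i]]) (auto intro!: continuous_intros TT_range)

lemma cont_J: "continuous_on TT (\<lambda>Y. J lam (unflat Y))"
  unfolding J_def psi_obj_def hfun_def unflat_def
  by (auto intro!: continuous_intros cont_rho cont_beta)

lemma cont_vz: "continuous_on TT (\<lambda>Y. vz (unflat Y))"
  unfolding vz_def vtot_def vi_def unflat_def
  apply (intro continuous_on_sum continuous_on_vec_lambda)
  subgoal for i k by (cases "k \<in> Kset E i") (auto intro!: continuous_intros cont_rho)
  done

lemma TT_ne: "TT \<noteq> {}"
proof -
  have "(0,0) \<in> TT" unfolding TT_alt using bbar_pos by (auto simp: less_imp_le)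
  then show ?thesis by auto
qed

lemma J_max: "\<exists>z\<in>Sall E bbar. \<forall>z'\<in>Sall E bbar. J lam z' \<le> J lam z"
proof -
  obtain Y where "Y \<in> TT" "\<forall>Y'\<in>TT. J lam (unflat Y') \<le> J lam (unflat Y)"
    using continuous_attains_sup[OF TT_compact TT_ne cont_J] by blast
  then show ?thesis unfolding Sall_image by auto
qed


lemma E_Sigma: "E = Sigma UNIV (Kset E)"
  by (auto simp: Kset_def)

lemma dot_vi: "dotp lam (vi E s r rho i z) = (\<Sum>k\<in>Kset E i. lam$k * (r i k * s i * fst z k * rho i (snd z k)))"
proof -
  have "dotp lam (vi E s r rho i z) = (\<Sum>k\<in>UNIV. if k \<in> Kset E i then lam$k * (r i k * s i * fst z k * rho i (snd z k)) else 0)"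
    unfolding dotp_def vi_def inner_vec_def by (auto intro!: sum.cong)
  also have "\<dots> = (\<Sum>k\<in>Kset E i. lam$k * (r i k * s i * fst z k * rho i (snd z k)))"
    by (simp add: sum.If_cases)
  finally show ?thesis .
qed

lemma J_eq: "pi_obj E s r rho beta x b - dotp lam (vtot E s r rho x b) = J lam (x,b)"
proof -
  have "pi_obj E s r rho beta x b = (\<Sum>i\<in>UNIV. \<Sum>k\<in>Kset E i. hfun rho beta i (r i k) (b i k) * s i * x i k)"
    unfolding pi_obj_def by (subst E_Sigma, subst sum.Sigma) auto
  moreover have "dotp lam (vtot E s r rho x b) = (\<Sum>i\<in>UNIV. \<Sum>k\<in>Kset E i. lam$k * (r i k * s i * x i k * rho i (b i k)))"
    unfolding vtot_def dotp_def inner_sum_right using dot_vi[unfolded dotp_def] by simp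
  ultimately show ?thesis
    unfolding J_def psi_obj_def hfun_def
    by (simp add: sum_subtractf[symmetric] algebra_simps)
qed


lemma J_lin: "J lam z = J lam0 z - dotp (lam - lam0) (vz z)"
proof -
  have "J lam z = pi_obj E s r rho beta (fst z) (snd z) - dotp lam (vz z)"
    "J lam0 z = pi_obj E s r rho beta (fst z) (snd z) - dotp lam0 (vz z)"
    using J_eq[of "fst z" "snd z"] by (auto simp: vz_def)
  then show ?thesis by (simp add: dotp_def inner_diff_left)
qed

definition zmax where "zmax lam = (SOME z. z\<in>Sall E bbar \<and> (\<forall>z'\<in>Sall E bbar. J lam z' \<le> J lam z))"
definition Psi where "Psi lam = J lam (zmax lam)"

lemma zmax: "zmax lam \<in> Sall E bbar" "\<And>z'. z'\<in>Sall E bbar \<Longrightarrow> J lam z' \<le> Psi lam"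
proof -
  have "zmax lam \<in> Sall E bbar \<and> (\<forall>z'\<in>Sall E bbar. J lam z' \<le> J lam (zmax lam))"
    unfolding zmax_def by (rule someI_ex) (use J_max in blast)
  then show "zmax lam \<in> Sall E bbar" "\<And>z'. z'\<in>Sall E bbar \<Longrightarrow> J lam z' \<le> Psi lam"
    by (auto simp: Psi_def)
qed

lemma SUP_Psi: "(SUP z\<in>Sall E bbar. ereal (pi_obj E s r rho beta (fst z) (snd z)
                                  - dotp lam (vtot E s r rho (fst z) (snd z)))) = ereal (Psi lam)"
proof -
  have eq: "\<And>z. pi_obj E s r rho beta (fst z) (snd z) - dotp lam (vtot E s r rho (fst z) (snd z)) = J lam z"
    using J_eq by simp
  show ?thesis unfolding eq
  proof (rule antisym)
    show "(SUP z\<in>Sall E bbar. ereal (J lam z)) \<le> ereal (Psi lam)"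
      by (rule SUP_least) (use zmax in auto)
    show "ereal (Psi lam) \<le> (SUP z\<in>Sall E bbar. ereal (J lam z))"
      unfolding Psi_def by (rule SUP_upper2[OF zmax(1)[of lam]]) simp
  qed
qed

lemma Sall_iff: "z \<in> Sall E bbar \<longleftrightarrow> (\<forall>i. (fst z i, snd z i) \<in> Sset E bbar i)"
  by (cases z) (auto simp: Sall_def)

lemma joint_iff:
  assumes z: "z \<in> Sall E bbar"
  shows "(\<forall>z'\<in>Sall E bbar. J lam z' \<le> J lam z) \<longleftrightarrow> (\<forall>i. (fst z i, snd z i) \<in> Sstar E s r rho beta bbar i lam)"
proof
  assume H: "\<forall>i. (fst z i, snd z i) \<in> Sstar E s r rho beta bbar i lam"
  show "\<forall>z'\<in>Sall E bbar. J lam z' \<le> J lam z"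
  proof
    fix z' assume "z' \<in> Sall E bbar"
    then have "\<forall>i. (fst z' i, snd z' i) \<in> Sset E bbar i" by (simp add: Sall_iff)
    then show "J lam z' \<le> J lam z" unfolding J_def
      using H by (intro sum_mono) (auto simp: Sstar_def)
  qed
next
  assume H: "\<forall>z'\<in>Sall E bbar. J lam z' \<le> J lam z"
  show "\<forall>i. (fst z i, snd z i) \<in> Sstar E s r rho beta bbar i lam"
  proof (rule ccontr)
    assume "\<not> ?thesis"
    then obtain i w where w: "w \<in> Sset E bbar i"
      and lt: "psi_obj E s r rho beta i lam (fst z i, snd z i) < psi_obj E s r rho beta i lam w"
      using z by (auto simp: Sstar_def Sall_iff not_le)
    define z' where "z' = ((fst z)(i := fst w), (snd z)(i := snd w))"
    have z'S: "z' \<in> Sall E bbar" using z w by (auto simp: Sall_iff z'_def)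
    have "J lam z' = psi_obj E s r rho beta i lam w + (\<Sum>j\<in>UNIV-{i}. psi_obj E s r rho beta j lam (fst z' j, snd z' j))"
      unfolding J_def by (subst sum.remove[of UNIV i]) (auto simp: z'_def)
    also have "(\<Sum>j\<in>UNIV-{i}. psi_obj E s r rho beta j lam (fst z' j, snd z' j))
        = (\<Sum>j\<in>UNIV-{i}. psi_obj E s r rho beta j lam (fst z j, snd z j))"
      by (rule sum.cong) (auto simp: z'_def)
    finally have eq1: "J lam z' = psi_obj E s r rho beta i lam w + (\<Sum>j\<in>UNIV-{i}. psi_obj E s r rho beta j lam (fst z j, snd z j))" .
    have "J lam z = psi_obj E s r rho beta i lam (fst z i, snd z i) + (\<Sum>j\<in>UNIV-{i}. psi_obj E s r rho beta j lam (fst z j, snd z j))"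
      unfolding J_def by (subst sum.remove[of UNIV i]) auto
    with eq1 lt have "J lam z' > J lam z" by simp
    with H z'S show False by force
  qed
qed


definition Vset where "Vset lam = {vz z | z. z \<in> Sall E bbar \<and> (\<forall>z'\<in>Sall E bbar. J lam z' \<le> J lam z)}"

lemma Vset_ne: "Vset lam \<noteq> {}"
  unfolding Vset_def using zmax(1)[of lam] zmax(2)[where lam=lam] unfolding Psi_def by blast

lemma Vset_compact: "compact (Vset lam)"
proof -
  let ?A = "{Y \<in> TT. (\<lambda>_. Psi lam) Y \<le> J lam (unflat Y)}"
  have cA: "closed ?A"
    by (rule continuous_on_closed_Collect_le[OF continuous_on_const cont_J TT_closed])
  have "?A \<subseteq> TT" by blast
  then have "bounded ?A" using TT_bounded bounded_subset by blast
  then have "compact ?A" using cA by (simp add: compact_eq_bounded_closed)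
  moreover have "Vset lam = (\<lambda>Y. vz (unflat Y)) ` ?A"
  proof
    show "Vset lam \<subseteq> (\<lambda>Y. vz (unflat Y)) ` ?A"
    proof
      fix w assume "w \<in> Vset lam"
      then obtain z where z: "w = vz z" "z \<in> Sall E bbar" "\<forall>z'\<in>Sall E bbar. J lam z' \<le> J lam z"
        unfolding Vset_def by blast
      then have "flat z \<in> TT" "Psi lam \<le> J lam z" using zmax(1)[of lam] by (auto simp: TT_def Psi_def)
      then show "w \<in> (\<lambda>Y. vz (unflat Y)) ` ?A" using z by (auto intro!: image_eqI[where x="flat z"])
    qed
    show "(\<lambda>Y. vz (unflat Y)) ` ?A \<subseteq> Vset lam"
    proof
      fix w assume "w \<in> (\<lambda>Y. vz (unflat Y)) ` ?A"
      then obtain Y where Y: "Y \<in> TT" "Psi lam \<le> J lam (unflat Y)" "w = vz (unflat Y)" by blast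
      then have "unflat Y \<in> Sall E bbar" by (simp add: TT_def)
      moreover have "\<forall>z'\<in>Sall E bbar. J lam z' \<le> J lam (unflat Y)"
        using zmax(2)[where lam=lam] Y(2) order_trans by blast
      ultimately show "w \<in> Vset lam" unfolding Vset_def using Y(3) by blast
    qed
  qed
  ultimately show ?thesis
    using compact_continuous_image[OF continuous_on_subset[OF cont_vz]] by auto
qed

lemma vz_sum: "vz z = (\<Sum>i\<in>UNIV. vi E s r rho i (fst z i, snd z i))"
  by (simp add: vz_def vtot_def)

lemma Vset_convex:
  assumes cv: "\<And>i. convex (vi E s r rho i ` Sstar E s r rho beta bbar i lam)"
  shows "convex (Vset lam)"
proof -
  have V: "Vset lam = {vz z | z. z \<in> Sall E bbar \<and> (\<forall>i. (fst z i, snd z i) \<in> Sstar E s r rho beta bbar i lam)}"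
  proof -
    have "\<And>z. (z \<in> Sall E bbar \<and> (\<forall>z'\<in>Sall E bbar. J lam z' \<le> J lam z)) =
       (z \<in> Sall E bbar \<and> (\<forall>i. (fst z i, snd z i) \<in> Sstar E s r rho beta bbar i lam))"
      using joint_iff by blast
    then show ?thesis by (simp only: Vset_def)
  qed
  show ?thesis unfolding convex_def
  proof (intro ballI allI impI)
    fix x y and u v :: real
    assume x: "x \<in> Vset lam" and y: "y \<in> Vset lam" and uv: "0 \<le> u" "0 \<le> v" "u + v = 1"
    obtain z1 where z1: "x = vz z1" "\<forall>i. (fst z1 i, snd z1 i) \<in> Sstar E s r rho beta bbar i lam"
      using x unfolding V by blast
    obtain z2 where z2: "y = vz z2" "\<forall>i. (fst z2 i, snd z2 i) \<in> Sstar E s r rho beta bbar i lam"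
      using y unfolding V by blast
    have "\<forall>i. \<exists>w\<in>Sstar E s r rho beta bbar i lam. vi E s r rho i w =
        u *\<^sub>R vi E s r rho i (fst z1 i, snd z1 i) + v *\<^sub>R vi E s r rho i (fst z2 i, snd z2 i)"
    proof
      fix i
      have "u *\<^sub>R vi E s r rho i (fst z1 i, snd z1 i) + v *\<^sub>R vi E s r rho i (fst z2 i, snd z2 i)
          \<in> vi E s r rho i ` Sstar E s r rho beta bbar i lam"
        using cv[of i] z1(2) z2(2) uv unfolding convex_def by blast
      then show "\<exists>w\<in>Sstar E s r rho beta bbar i lam. vi E s r rho i w =
        u *\<^sub>R vi E s r rho i (fst z1 i, snd z1 i) + v *\<^sub>R vi E s r rho i (fst z2 i, snd z2 i)"
        unfolding image_iff by (metis)
    qed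
    then have "\<forall>i. \<exists>w. w \<in> Sstar E s r rho beta bbar i lam \<and> vi E s r rho i w =
        u *\<^sub>R vi E s r rho i (fst z1 i, snd z1 i) + v *\<^sub>R vi E s r rho i (fst z2 i, snd z2 i)" by blast
    from choice[OF this] obtain g where g0: "\<forall>i. g i \<in> Sstar E s r rho beta bbar i lam \<and> vi E s r rho i (g i) =
        u *\<^sub>R vi E s r rho i (fst z1 i, snd z1 i) + v *\<^sub>R vi E s r rho i (fst z2 i, snd z2 i)" by blast
    then have g: "\<And>i. g i \<in> Sstar E s r rho beta bbar i lam"
      "\<And>i. vi E s r rho i (g i) = u *\<^sub>R vi E s r rho i (fst z1 i, snd z1 i) + v *\<^sub>R vi E s r rho i (fst z2 i, snd z2 i)"
      by auto
    define z where "z = (\<lambda>i. fst (g i), \<lambda>i. snd (g i))"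
    have zS: "z \<in> Sall E bbar" using g(1) by (auto simp: Sall_iff z_def Sstar_def)
    have zst: "\<forall>i. (fst z i, snd z i) \<in> Sstar E s r rho beta bbar i lam" using g(1) by (simp add: z_def)
    have vzeq: "vz z = u *\<^sub>R x + v *\<^sub>R y"
      unfolding vz_sum z1(1) z2(1) scaleR_sum_right sum.distrib[symmetric]
      using g(2) by (simp add: z_def)
    show "u *\<^sub>R x + v *\<^sub>R y \<in> Vset lam" unfolding V
      by (intro CollectI exI[of _ z]) (use zS zst vzeq in auto)
  qed
qed


lemma eps_le:
  fixes a b K :: real
  assumes K: "K \<ge> 0" and H: "\<And>t. 0 < t \<Longrightarrow> t \<le> 1 \<Longrightarrow> b - t * K \<le> a"
  shows "b \<le> a"
proof (rule ccontr)
  assume "\<not> b \<le> a"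
  then have ba: "b - a > 0" by simp
  define t where "t = min 1 ((b - a) / (K + 1))"
  have t0: "0 < t" "t \<le> 1" using ba K by (auto simp: t_def)
  have "t * K \<le> (b - a) / (K + 1) * K" unfolding t_def by (rule mult_right_mono) (use K in auto)
  also have "\<dots> < b - a" using ba K by (simp add: field_simps)
  finally show False using H[OF t0] by simp
qed

lemma stepA:
  fixes lamstar d :: "real^'k" and P T :: real and p :: "real^'k \<Rightarrow> ereal"
  assumes min: "\<And>lam. ereal (Psi lamstar) + p lamstar \<le> ereal (Psi lam) + p lam"
    and pstar: "p lamstar = ereal P"
    and conv: "\<And>t. 0 < t \<Longrightarrow> t \<le> 1 \<Longrightarrow> p (lamstar + t *\<^sub>R d) \<le> ereal (P + t * T)"
  shows "\<exists>w\<in>Vset lamstar. dotp d w \<le> T"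
proof -
  define g where "g Y = dotp d (vz (unflat Y))" for Y
  have cg: "continuous_on TT g" unfolding g_def dotp_def by (intro continuous_intros cont_vz)
  obtain Ym where Ym: "Ym \<in> TT" "\<And>Y. Y \<in> TT \<Longrightarrow> g Ym \<le> g Y"
    using continuous_attains_inf[OF TT_compact TT_ne cg] by blast
  define zs where "zs = zmax lamstar"
  define K where "K = dotp d (vz zs) - g Ym"
  have K0: "K \<ge> 0" using Ym(2)[of "flat zs"] zmax(1)[of lamstar]
    by (auto simp: K_def g_def TT_def zs_def)
  have key: "dotp d (vz (zmax (lamstar + t *\<^sub>R d))) \<le> T \<and>
      Psi lamstar - t * K \<le> J lamstar (zmax (lamstar + t *\<^sub>R d))" if t: "0 < t" "t \<le> 1" for t
  proof -
    define lt where "lt = lamstar + t *\<^sub>R d"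
    define zt where "zt = zmax lt"
    have "ereal (Psi lamstar) + ereal P \<le> ereal (Psi lt) + p lt" using min[of lt] pstar by simp
    also have "\<dots> \<le> ereal (Psi lt) + ereal (P + t * T)" using add_left_mono[OF conv[OF t], of "ereal (Psi lt)"] by (simp add: lt_def)
    finally have ineq1: "Psi lamstar \<le> Psi lt + t * T" by simp
    have lin: "J lt z = J lamstar z - t * dotp d (vz z)" for z
      using J_lin[of lt z lamstar] by (simp add: lt_def dotp_def)
    have "Psi lt = J lamstar zt - t * dotp d (vz zt)" unfolding Psi_def zt_def by (rule lin)
    moreover have "J lamstar zt \<le> Psi lamstar" using zmax by (simp add: zt_def)
    ultimately have "t * dotp d (vz zt) \<le> t * T" using ineq1 by simp
    then have A1: "dotp d (vz zt) \<le> T" using t by simp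
    have "Psi lamstar - t * dotp d (vz zs) = J lt zs" using lin[of zs] by (simp add: Psi_def zs_def)
    also have "\<dots> \<le> Psi lt" using zmax(2)[where lam=lt] zmax(1)[of lamstar] by (simp add: zs_def)
    finally have "Psi lamstar - t * dotp d (vz zs) + t * dotp d (vz zt) \<le> J lamstar zt"
      using \<open>Psi lt = J lamstar zt - t * dotp d (vz zt)\<close> by simp
    moreover have "g Ym \<le> dotp d (vz zt)"
      using Ym(2)[of "flat zt"] zmax(1)[of lt] by (auto simp: g_def TT_def zt_def)
    moreover have "t * g Ym \<le> t * dotp d (vz zt)" using calculation(2) t by simp
    ultimately have "Psi lamstar - t * K \<le> J lamstar zt" by (simp add: K_def algebra_simps)
    with A1 show ?thesis by (simp add: zt_def lt_def)
  qed
  define G where "G = {Y \<in> TT. g Y \<le> (\<lambda>_. T) Y}"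
  have cG: "closed G" unfolding G_def
    by (rule continuous_on_closed_Collect_le[OF cg continuous_on_const TT_closed])
  have "G \<subseteq> TT" by (auto simp: G_def)
  then have "compact G" using cG TT_bounded bounded_subset by (auto simp: compact_eq_bounded_closed)
  have z1G: "flat (zmax (lamstar + 1 *\<^sub>R d)) \<in> G"
    using key[of 1] zmax(1)[of "lamstar + 1 *\<^sub>R d"] by (simp add: G_def TT_def g_def)
  then have "G \<noteq> {}" by auto
  obtain Yb where Yb: "Yb \<in> G" "\<And>Y. Y \<in> G \<Longrightarrow> J lamstar (unflat Y) \<le> J lamstar (unflat Yb)"
    using continuous_attains_sup[OF \<open>compact G\<close> \<open>G \<noteq> {}\<close> continuous_on_subset[OF cont_J \<open>G \<subseteq> TT\<close>]] by blast
  have "Psi lamstar \<le> J lamstar (unflat Yb)"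
  proof (rule eps_le[OF K0])
    fix t :: real assume t: "0 < t" "t \<le> 1"
    have "flat (zmax (lamstar + t *\<^sub>R d)) \<in> G"
      using key[OF t] zmax(1)[of "lamstar + t *\<^sub>R d"] by (simp add: G_def TT_def g_def)
    from Yb(2)[OF this] have "J lamstar (zmax (lamstar + t *\<^sub>R d)) \<le> J lamstar (unflat Yb)" by simp
    then show "Psi lamstar - t * K \<le> J lamstar (unflat Yb)"
      using key[OF t] by linarith
  qed
  moreover have "unflat Yb \<in> Sall E bbar" "g Yb \<le> T" using Yb(1) by (auto simp: G_def TT_def)
  ultimately have "vz (unflat Yb) \<in> Vset lamstar"
    unfolding Vset_def using zmax(2)[where lam=lamstar] order_trans by blast
  then show ?thesis using \<open>g Yb \<le> T\<close> by (auto simp: g_def)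
qed

end



lemma stepB:
  fixes V :: "(real^'k) set" and A :: "((real^'k) \<times> real) set"
  assumes cA: "convex A" and cV: "convex V" and kV: "compact V" and nV: "V \<noteq> {}"
    and A0: "(0,0) \<in> A"
    and disj: "\<And>d t. (d,t) \<in> A \<Longrightarrow> \<exists>w\<in>V. inner d w \<le> t"
  shows "\<exists>w\<in>V. \<forall>d t. (d,t)\<in>A \<longrightarrow> inner d w \<le> t"
proof -
  define B where "B = (\<Inter>w\<in>V. {x :: (real^'k) \<times> real. inner (-w, 1) x < 0})"
  have Bmem: "(d,t) \<in> B \<longleftrightarrow> (\<forall>w\<in>V. t < inner d w)" for d t
    by (auto simp: B_def inner_commute)
  have cB: "convex B" unfolding B_def by (intro convex_INT convex_halfspace_lt)
  have B0: "(0, t) \<in> B" if "t < 0" for t using that by (simp add: Bmem)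
  have nB: "B \<noteq> {}" using B0[of "-1"] by auto
  have nA: "A \<noteq> {}" using A0 by auto
  have AB: "A \<inter> B = {}"
  proof (rule ccontr)
    assume "A \<inter> B \<noteq> {}"
    then obtain d t where "(d,t) \<in> A" "(d,t) \<in> B" by auto
    then show False using disj[of d t] Bmem by force
  qed
  obtain a \<beta> where a: "a \<noteq> 0" "\<And>x. x \<in> A \<Longrightarrow> inner a x \<le> \<beta>" "\<And>x. x \<in> B \<Longrightarrow> inner a x \<ge> \<beta>"
    using separating_hyperplane_sets[OF cA cB nA nB AB] by blast
  obtain a1 c where ac: "a = (a1, c)" by (cases a)
  have beta0: "0 \<le> \<beta>" using a(2)[OF A0] by (simp add: ac)
  have Bt: "c * t \<ge> \<beta>" if "t < 0" for t using a(3)[OF B0[OF that]] by (simp add: ac)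
  have c0: "c \<le> 0" using Bt[of "-1"] beta0 by simp
  have beta00: "\<beta> = 0"
  proof (rule ccontr)
    assume "\<beta> \<noteq> 0"
    then have bp: "\<beta> > 0" using beta0 by simp
    then have "c < 0" using Bt[of "-1"] by simp
    then have "c * (\<beta> / (2 * c)) \<ge> \<beta>" using Bt[of "\<beta> / (2*c)"] bp by (simp add: divide_pos_neg)
    then show False using \<open>c < 0\<close> bp by simp
  qed
  have cneg: "c < 0"
  proof (rule ccontr)
    assume "\<not> c < 0"
    then have c00: "c = 0" using c0 by simp
    then have a1n: "a1 \<noteq> 0" using a(1) ac by (auto simp: zero_prod_def)
    obtain M where M: "\<And>w. w \<in> V \<Longrightarrow> norm w \<le> M"
      using compact_imp_bounded[OF kV] by (auto simp: bounded_iff)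
    have "(-a1, - norm a1 * M - 1) \<in> B"
    proof (unfold Bmem, intro ballI)
      fix w assume w: "w \<in> V"
      have "inner a1 w \<le> norm a1 * norm w" using norm_cauchy_schwarz[of a1 w] by simp
      also have "\<dots> \<le> norm a1 * M" using M[OF w] by (simp add: mult_left_mono)
      finally show "- norm a1 * M - 1 < inner (- a1) w" by simp
    qed
    from a(3)[OF this] have "inner a1 (-a1) \<ge> 0" using beta00 c00 ac by simp
    then have "inner a1 a1 \<le> 0" by simp
    then show False using a1n inner_gt_zero_iff[of a1] by linarith
  qed
  define w0 where "w0 = (- 1 / c) *\<^sub>R a1"
  have Aside: "inner d w0 \<le> t" if "(d,t) \<in> A" for d t
  proof -
    have "inner a1 d + c * t \<le> 0" using a(2)[OF that] beta00 ac by simp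
    then have "(-1/c) * inner a1 d \<le> t" using cneg by (simp add: field_simps)
    then show ?thesis by (simp add: w0_def inner_commute)
  qed
  have Bside: "t \<le> inner d w0" if "(d,t) \<in> B" for d t
  proof -
    have "inner a1 d + c * t \<ge> 0" using a(3)[OF that] beta00 ac by simp
    then have "t \<le> (-1/c) * inner a1 d" using cneg by (simp add: field_simps)
    then show ?thesis by (simp add: w0_def inner_commute)
  qed
  have "w0 \<in> V"
  proof (rule ccontr)
    assume "w0 \<notin> V"
    then obtain e b0 where e: "inner e w0 < b0" "\<And>x. x \<in> V \<Longrightarrow> inner e x > b0"
      using separating_hyperplane_closed_point[OF cV compact_imp_closed[OF kV]] by blast
    have "(e, (inner e w0 + b0) / 2) \<in> B" unfolding Bmem using e by fastforce
    from Bside[OF this] e(1) show False by (simp add: inner_commute)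
  qed
  then show ?thesis using Aside by blast
qed


theorem mainTheorem6:
  fixes E :: "('i::finite \<times> 'k::finite) set"
    and s :: "'i \<Rightarrow> real" and r :: "'i \<Rightarrow> 'k \<Rightarrow> real" and bbar :: "'i \<Rightarrow> real"
    and rho beta :: "'i \<Rightarrow> real \<Rightarrow> real"
    and u :: "real ^ 'k \<Rightarrow> ereal"
    and lamstar :: "real ^ 'k"
  assumes s_pos: "\<And>i. s i > 0"
    and r_nonneg: "\<And>i k. (i, k) \<in> E \<Longrightarrow> r i k \<ge> 0"
    and bbar_pos: "\<And>i. bbar i > 0"
    and rho_range: "\<And>i b. b \<in> {0..bbar i} \<Longrightarrow> rho i b \<in> {0..1}"
    and beta_mono: "\<And>i. mono_on {0..bbar i} (beta i)"
    and beta_le: "\<And>i b. b \<in> {0..bbar i} \<Longrightarrow> beta i b \<le> b"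
    and rho_cont: "\<And>i. continuous_on {0..bbar i} (rho i)"
    and beta_cont: "\<And>i. continuous_on {0..bbar i} (beta i)"
    and u_concave: "concave_ext u"
    and lam_min: "\<And>lam. Qdual E s r rho beta bbar u lamstar \<le> Qdual E s r rho beta bbar u lam"
    and Q_finite: "\<bar>Qdual E s r rho beta bbar u lamstar\<bar> \<noteq> \<infinity>"
    and V_convex: "\<And>i. convex (vi E s r rho i ` Sstar E s r rho beta bbar i lamstar)"
  shows "\<exists>x b. (x, b) \<in> Sall E bbar
              \<and> (\<forall>i. (x i, b i) \<in> Sstar E s r rho beta bbar i lamstar)
              \<and> Fprimal E s r rho beta u x b = Qdual E s r rho beta bbar u lamstar"
proof -
  interpret M: Mset E s r bbar rho beta
    by unfold_locales (use bbar_pos rho_cont beta_cont in auto)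
  have Qeq: "Qdual E s r rho beta bbar u lam = ereal (M.Psi lam) + pconj u lam" for lam
    unfolding Qdual_def M.SUP_Psi ..
  obtain P where pstar: "pconj u lamstar = ereal P"
    using Q_finite unfolding Qeq by (cases "pconj u lamstar") auto
  define A where "A = {(d, t). \<forall>v. ereal (dotp (lamstar + d) v) + u v \<le> ereal (t + P)}"
  have Amem: "(d, t) \<in> A \<longleftrightarrow> pconj u (lamstar + d) \<le> ereal (t + P)" for d t
    unfolding A_def pconj_def by (simp add: SUP_le_iff)
  have A0: "(0, 0) \<in> A"
    unfolding Amem using pstar by simp
  have cA: "convex A"
    unfolding convex_def
  proof (intro ballI allI impI)
    fix x y and a b :: real
    assume x: "x \<in> A" and y: "y \<in> A" and ab: "0 \<le> a" "0 \<le> b" "a + b = 1"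
    obtain d1 t1 where x1: "x = (d1, t1)" by (cases x)
    obtain d2 t2 where y1: "y = (d2, t2)" by (cases y)
    show "a *\<^sub>R x + b *\<^sub>R y \<in> A"
      unfolding A_def x1 y1
    proof (simp, intro allI)
      fix v
      have h1: "ereal (dotp (lamstar + d1) v) + u v \<le> ereal (t1 + P)"
        and h2: "ereal (dotp (lamstar + d2) v) + u v \<le> ereal (t2 + P)"
        using x y by (auto simp: A_def x1 y1)
      show "ereal (dotp (lamstar + (a *\<^sub>R d1 + b *\<^sub>R d2)) v) + u v \<le> ereal (a * t1 + b * t2 + P)"
      proof (cases "u v")
        case (real rv)
        have "dotp (lamstar + d1) v + rv \<le> t1 + P" "dotp (lamstar + d2) v + rv \<le> t2 + P"
          using h1 h2 real by auto
        then have "a * (dotp (lamstar + d1) v + rv) \<le> a * (t1 + P)"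
          "b * (dotp (lamstar + d2) v + rv) \<le> b * (t2 + P)"
          using ab by (auto intro: mult_left_mono)
        moreover have "dotp (lamstar + (a *\<^sub>R d1 + b *\<^sub>R d2)) v
            = a * dotp (lamstar + d1) v + b * dotp (lamstar + d2) v - (a + b - 1) * dotp lamstar v"
          by (simp add: dotp_def inner_add_left algebra_simps)
        moreover have "rv = a * rv + b * rv" "P = a * P + b * P"
          using ab(3) by (metis distrib_right mult_1)+
        ultimately have "dotp (lamstar + (a *\<^sub>R d1 + b *\<^sub>R d2)) v + rv \<le> a * t1 + b * t2 + P"
          using ab(3) by (simp add: algebra_simps)
        then show ?thesis using real by simp
      next
        case PInf
        then show ?thesis using h1 by simp
      next
        case MInf
        then show ?thesis by simp
      qed
    qed
  qed
  have min: "ereal (M.Psi lamstar) + pconj u lamstar \<le> ereal (M.Psi lam) + pconj u lam" for lam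
    using lam_min[of lam] unfolding Qeq .
  have disj: "\<exists>w\<in>M.Vset lamstar. inner d w \<le> t" if dt: "(d, t) \<in> A" for d t
  proof -
    have conv: "pconj u (lamstar + \<tau> *\<^sub>R d) \<le> ereal (P + \<tau> * t)" if "0 < \<tau>" "\<tau> \<le> 1" for \<tau>
    proof -
      have "(1 - \<tau>) *\<^sub>R (0, 0) + \<tau> *\<^sub>R (d, t) \<in> A"
        using cA A0 dt that unfolding convex_def by (metis diff_ge_0_iff_ge diff_add_cancel less_imp_le)
      then have "(\<tau> *\<^sub>R d, \<tau> * t) \<in> A" by simp
      then show ?thesis unfolding Amem by (simp add: add.commute)
    qed
    obtain w where "w \<in> M.Vset lamstar" "dotp d w \<le> t"
      using M.stepA[OF min pstar conv] by blast
    then show ?thesis by (auto simp: dotp_def)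
  qed
  obtain w where wV: "w \<in> M.Vset lamstar" and wA: "\<And>d t. (d, t) \<in> A \<Longrightarrow> inner d w \<le> t"
    using stepB[OF cA M.Vset_convex[OF V_convex] M.Vset_compact M.Vset_ne A0 disj] by blast
  obtain z where z: "w = M.vz z" "z \<in> Sall E bbar" "\<forall>z'\<in>Sall E bbar. M.J lamstar z' \<le> M.J lamstar z"
    using wV unfolding M.Vset_def by blast
  have zst: "\<forall>i. (fst z i, snd z i) \<in> Sstar E s r rho beta bbar i lamstar"
    using M.joint_iff[OF z(2)] z(3) by blast
  have Jz: "M.J lamstar z = M.Psi lamstar"
  proof (rule antisym)
    show "M.J lamstar z \<le> M.Psi lamstar" by (rule M.zmax(2)[OF z(2)])
    show "M.Psi lamstar \<le> M.J lamstar z" unfolding M.Psi_def using z(3) M.zmax(1)[of lamstar] by blast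
  qed
  have piz: "pi_obj E s r rho beta (fst z) (snd z) = M.Psi lamstar + dotp lamstar w"
    using M.J_eq[of "fst z" "snd z" lamstar] Jz z(1) by (simp add: M.vz_def)
  obtain v0 where v0: "- \<infinity> < ereal (dotp lamstar v0) + u v0"
  proof -
    have "- \<infinity> < pconj u lamstar" using pstar by simp
    then show ?thesis using that unfolding pconj_def less_SUP_iff by blast
  qed
  have pfin: "pconj u lam \<noteq> - \<infinity>" for lam
  proof -
    have "u v0 \<noteq> - \<infinity>" using v0 by auto
    then have "- \<infinity> < ereal (dotp lam v0) + u v0" by (cases "u v0") auto
    also have "\<dots> \<le> pconj u lam" unfolding pconj_def by (rule SUP_upper) simp
    finally show ?thesis by auto
  qed
  have INFeq: "(INF lam. pconj u lam - ereal (dotp lam w)) = ereal (P - dotp lamstar w)"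
  proof (rule antisym)
    show "(INF lam. pconj u lam - ereal (dotp lam w)) \<le> ereal (P - dotp lamstar w)"
      by (rule INF_lower2[of lamstar]) (auto simp: pstar)
    show "ereal (P - dotp lamstar w) \<le> (INF lam. pconj u lam - ereal (dotp lam w))"
    proof (rule INF_greatest)
      fix lam
      show "ereal (P - dotp lamstar w) \<le> pconj u lam - ereal (dotp lam w)"
      proof (cases "pconj u lam")
        case (real pl)
        then have "(lam - lamstar, pl - P) \<in> A" unfolding Amem by simp
        from wA[OF this] have "inner (lam - lamstar) w \<le> pl - P" .
        then show ?thesis using real by (simp add: dotp_def inner_diff_left)
      next
        case PInf then show ?thesis by simp
      next
        case MInf then show ?thesis using pfin by simp
      qed
    qed
  qed
  have "Fprimal E s r rho beta u (fst z) (snd z) = Qdual E s r rho beta bbar u lamstar"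
    unfolding Fprimal_def Qeq pstar
    using INFeq piz z(1) by (simp add: M.vz_def)
  then show ?thesis using z(2) zst by (intro exI[of _ "fst z"] exI[of _ "snd z"]) simp
qed

end
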